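(* Let $p=1/2$, let $U$ be a utility function with conjugate $V$, and let $y>0$ be such that $\int_{\mathbb R}H(x)\phi(x)\,dx<\infty$, where $H(x)=V\!\left(y\exp(-x/2-1/8)\right)$. Then for every $\varepsilon>0$ there is $M>0$ such that for all $n\in\mathbb N$ $$\sum_{k=0}^nH(z_{n,k})\mathbb 1_{\{H(z_{n,k})>M\}}f_{n,k}<\varepsilon\qquad\text{and}\qquad\sum_{k=0}^n|H(z_{n,k})|\mathbb 1_{\{H(z_{n,k})<-M\}}f_{n,k}<\varepsilon.$$ Consequently $\limsup_{n\to\infty}\sum_{k=0}^nH(z_{n,k})f_{n,k}\le\int_{\mathbb R}H(x)\phi(x)\,dx$.
   Context: A utility function is a function $U:(0,\infty)\to\mathbb R$ that is strictly increasing, strictly concave, smooth, with $\lim_{x\to0}U'(x)=\infty$ and $\lim_{x\to\infty}U'(x)=0$; its conjugate is $V(y)=\sup_{x>0}\{U(x)-xy\}$, $y>0$. $f_{n,k}=\binom nk2^{-n}$, $z_{n,k}=\frac{2k-n}{\sqrt n}$ for $k=0,\dots,n$; $\phi(x)=\frac1{\sqrt{2\pi}}e^{-x^2/2}$. *)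

theory Defs
  imports "HOL-Analysis.Analysis"
begin

definition utility_function :: "(real \<Rightarrow> real) \<Rightarrow> bool" where
  "utility_function U \<longleftrightarrow>
     (\<forall>x y. 0 < x \<longrightarrow> x < y \<longrightarrow> U x < U y) \<and>
     (\<forall>x y t. 0 < x \<longrightarrow> 0 < y \<longrightarrow> x \<noteq> y \<longrightarrow> 0 < t \<longrightarrow> t < 1 \<longrightarrow>
        t * U x + (1 - t) * U y < U (t * x + (1 - t) * y)) \<and>
     (\<forall>k. \<forall>x>0. ((deriv ^^ k) U) differentiable (at x)) \<and>
     filterlim (deriv U) at_top (at_right 0) \<and>
     (deriv U \<longlongrightarrow> 0) at_top"

definition conj_fun :: "(real \<Rightarrow> real) \<Rightarrow> real \<Rightarrow> real" where
  "conj_fun U y = (SUP x\<in>{0<..}. U x - x * y)"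

definition fnk :: "nat \<Rightarrow> nat \<Rightarrow> real" where
  "fnk n k = real (n choose k) / 2 ^ n"

definition znk :: "nat \<Rightarrow> nat \<Rightarrow> real" where
  "znk n k = (2 * real k - real n) / sqrt (real n)"

definition phi :: "real \<Rightarrow> real" where
  "phi x = exp (- (x ^ 2) / 2) / sqrt (2 * pi)"

end

theory Submission
  imports Defs "HOL-Probability.Probability" "HOL-Real_Asymp.Real_Asymp"
begin



lemma ln_ineq:
  fixes t :: real assumes "0 \<le> t" "t < 1"
  shows "2*t + 2*t^3/3 \<le> ln (1+t) - ln (1-t)"
proof -
  define f where "f t = ln (1+t) - ln (1-t) - 2*t - 2*t^3/3" for t :: real
  have "f 0 \<le> f t"
  proof (rule DERIV_nonneg_imp_increasing_open[of 0 t f])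
    show "0 \<le> t" by fact
    fix x :: real assume x: "0 < x" "x < t"
    have "DERIV f x :> (1/(1+x) + 1/(1-x) - 2 - 2*x^2)"
      unfolding f_def using x assms
      by (auto intro!: derivative_eq_intros simp: power2_eq_square)
    moreover have "1/(1+x) + 1/(1-x) - 2 - 2*x^2 = 2*x^4/(1-x^2)"
    proof -
      have h: "1 - x*x > 0" using x assms by (smt (verit) mult_strict_mono' mult_le_one)
      have "1 - x^2 = (1+x)*(1-x)" by (simp add: algebra_simps power2_eq_square)
      then show ?thesis using h x assms
        by (simp add: divide_simps power2_eq_square power4_eq_xxxx) (simp add: algebra_simps)
    qed
    moreover have "2*x^4/(1-x^2) \<ge> 0"
    proof -
      have "x^2 < 1" using x assms by (simp add: power2_eq_square) (smt (verit) mult_strict_mono' mult_le_one)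
      then show ?thesis by simp
    qed
    ultimately show "\<exists>y. DERIV f x :> y \<and> y \<ge> 0" by auto
  next
    show "continuous_on {0..t} f" unfolding f_def using assms
      by (auto intro!: continuous_intros)
  qed
  then show ?thesis by (simp add: f_def)
qed

lemma choose_step:
  assumes "1 \<le> k" "k \<le> n"
  shows "real (n - k + 1) * real (n choose (k-1)) = real k * real (n choose k)"
proof -
  have a: "k * (n choose k) = n * ((n - 1) choose (k - 1))"
    using assms by (intro times_binomial_minus1_eq) auto
  have b: "(n - (k-1)) * (n choose (k-1)) = n * ((n - 1) choose (k-1))"
    by (rule binomial_absorb_comp)
  have "n - (k-1) = n - k + 1" using assms by auto
  then have "(n - k + 1) * (n choose (k-1)) = k * (n choose k)" using a b by simp
  then show ?thesis by (metis of_nat_mult)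
qed

lemma ratio_step:
  assumes n: "n \<ge> 1" and k: "1 \<le> k" "k \<le> n" "n + 2 \<le> 2*k"
    and big: "(2*real k - 1 - real n)^2 \<ge> 12 * real n"
  shows "real (n choose k) * exp ((2*real k - real n)^2/(2*real n))
     \<le> real (n choose (k-1)) * exp ((2*real (k-1) - real n)^2/(2*real n))"
proof -
  define m where "m = 2*real k - 1 - real n"
  have m1: "m \<ge> 1" using k unfolding m_def by linarith
  have mlt: "m < real n + 1" using k unfolding m_def by linarith
  define t where "t = m / (real n + 1)"
  have t0: "0 \<le> t" and t1: "t < 1" using m1 mlt by (auto simp: t_def)
  have np: "real n > 0" using n by simp
  have sq: "t^2 * real n \<ge> 3"
  proof -
    have "(real n + 1)^2 \<le> (2 * real n)^2" using n by (intro power_mono) auto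
    hence "3 * (real n + 1)^2 \<le> 12 * real n * real n" by (simp add: power2_eq_square)
    also have "\<dots> \<le> m^2 * real n" using big np unfolding m_def by (intro mult_right_mono) auto
    finally have "3 * (real n + 1)^2 \<le> m^2 * real n" .
    thus ?thesis unfolding t_def by (simp add: power_divide field_simps)
  qed
  have tm: "t * (real n + 1) = m" unfolding t_def using np by (simp add: field_simps)
  have "2*m/real n = 2*t + 2*t/real n" unfolding tm[symmetric] using np by (simp add: field_simps)
  also have "\<dots> \<le> 2*t + 2*t^3/3"
  proof -
    have "t/real n \<le> t^3/3"
    proof -
      have "t * 3 \<le> t * (t^2 * real n)" using sq t0 by (intro mult_left_mono) auto
      thus ?thesis using np by (simp add: field_simps power3_eq_cube power2_eq_square)
    qed
    thus ?thesis by simp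
  qed
  also have "\<dots> \<le> ln (1+t) - ln (1-t)" by (rule ln_ineq[OF t0 t1])
  finally have "exp (2*m/real n) \<le> exp (ln (1+t) - ln (1-t))" by simp
  also have "\<dots> = (1+t)/(1-t)" using t0 t1 by (simp add: exp_diff)
  also have "\<dots> = (real n + 1 + m)/(real n + 1 - m)"
  proof -
    have a: "1 + t = (real n + 1 + m)/(real n + 1)" "1 - t = (real n + 1 - m)/(real n + 1)"
      unfolding t_def using np by (simp_all add: field_simps)
    show ?thesis unfolding a using np mlt by simp
  qed
  finally have E: "exp (2*m/real n) * (real n + 1 - m) \<le> real n + 1 + m"
    using mlt by (simp add: field_simps)
  have kk: "real n + 1 + m = 2 * real k" "real n + 1 - m = 2 * real (n - k + 1)"
    using k unfolding m_def by (auto simp: of_nat_diff)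
  have "exp (2*m/real n) * (2*real (n - k + 1)) \<le> 2*real k" using E kk by metis
  then have "2*(exp (2*m/real n) * real (n - k + 1)) \<le> 2*real k" by (simp add: algebra_simps)
  then have E2: "exp (2*m/real n) * real (n - k + 1) \<le> real k" by simp
  have expeq: "exp ((2*real k - real n)^2/(2*real n)) = exp (2*m/real n) * exp ((2*real (k-1) - real n)^2/(2*real n))"
  proof -
    have r: "real (k-1) = real k - 1" using k by (simp add: of_nat_diff)
    have "(2*real k - real n)^2/(2*real n) = 2*m/real n + (2*(real k - 1) - real n)^2/(2*real n)"
      unfolding m_def using np by (simp add: field_simps power2_eq_square)
    then show ?thesis unfolding r by (simp add: exp_add)
  qed
  have cs: "real (n - k + 1) * real (n choose (k-1)) = real k * real (n choose k)" by (rule choose_step[OF k(1,2)])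
  have "real k * (real (n choose k) * exp (2*m/real n)) = exp (2*m/real n) * (real k * real (n choose k))"
    by (simp add: algebra_simps)
  also have "\<dots> = exp (2*m/real n) * (real (n - k + 1) * real (n choose (k-1)))" by (simp only: cs)
  also have "\<dots> = exp (2*m/real n) * real (n - k + 1) * real (n choose (k-1))" by (simp only: mult.assoc)
  also have "\<dots> \<le> real k * real (n choose (k-1))"
    using E2 by (intro mult_right_mono) auto
  finally have "real (n choose k) * exp (2*m/real n) \<le> real (n choose (k-1))"
    using k by (simp add: mult_le_cancel_left)
  then show ?thesis unfolding expeq
    by (metis exp_gt_zero mult.assoc mult_right_mono less_eq_real_def)
qed



declare binomial_Suc_Suc [simp del]

lemma central_binom_sq: "real ((2*m) choose m)^2 * (2*real m+1) \<le> 16^m"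
proof (induction m)
  case 0 then show ?case by simp
next
  case (Suc m)
  have a: "Suc m * (Suc (Suc (2*m)) choose Suc m) = Suc (Suc (2*m)) * (Suc (2*m) choose m)"
    by (rule Suc_times_binomial)
  have b: "Suc m * (Suc (2*m) choose Suc m) = Suc (2*m) * ((2*m) choose m)"
    by (rule Suc_times_binomial)
  have c: "Suc (2*m) choose Suc m = Suc (2*m) choose m"
    using binomial_symmetric[of "Suc m" "Suc (2*m)"] by simp
  have a': "(Suc (Suc (2*m)) choose Suc m) = 2 * (Suc (2*m) choose m)"
  proof -
    have e: "Suc (Suc (2*m)) = Suc m * 2" by simp
    from a have "Suc m * (Suc (Suc (2*m)) choose Suc m) = Suc m * (2 * (Suc (2*m) choose m))"
      unfolding e by (simp only: mult.assoc)
    then show ?thesis by (metis Zero_not_Suc mult_left_cancel)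
  qed
  define c0 where "c0 = real ((2*m) choose m)"
  define c1 where "c1 = real ((2*Suc m) choose Suc m)"
  have e1: "c1 * (real m + 1) = 2 * (2*real m+1) * c0"
  proof -
    have bb: "Suc m * (Suc (2*m) choose m) = Suc (2*m) * ((2*m) choose m)"
      using b unfolding c .
    have "real (Suc m * (Suc (2*m) choose m)) = real (Suc (2*m) * ((2*m) choose m))"
      by (simp only: bb)
    then have "(real m + 1) * real (Suc (2*m) choose m) = (2*real m+1) * c0"
      unfolding c0_def by (simp add: algebra_simps)
    moreover have "c1 = 2 * real (Suc (2*m) choose m)"
    proof -
      have e2: "2 * Suc m = Suc (Suc (2*m))" by simp
      show ?thesis unfolding c1_def e2 a' by (simp only: of_nat_mult of_nat_numeral)
    qed
    ultimately show ?thesis by (simp add: algebra_simps)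
  qed
  have mp: "real m + 1 > 0" by simp
  have "c1^2 * (2*real (Suc m)+1) * (real m + 1)^2 = (c1 * (real m+1))^2 * (2*real m+3)"
    by (simp add: power2_eq_square algebra_simps)
  also have "\<dots> = 4 * (2*real m+1) * (2*real m+3) * (c0^2 * (2*real m + 1))"
    unfolding e1 by (simp add: power2_eq_square algebra_simps)
  also have "\<dots> \<le> 4 * (2*real m+1) * (2*real m+3) * 16^m"
    using Suc.IH unfolding c0_def by (intro mult_left_mono) auto
  also have "\<dots> \<le> 16 * 16^m * (real m + 1)^2"
  proof -
    have "4 * (2*real m+1) * (2*real m+3) \<le> 16 * (real m + 1)^2" by (simp add: power2_eq_square algebra_simps)
    from mult_right_mono[OF this, of "16^m"] show ?thesis by (simp add: algebra_simps)
  qed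
  finally have "c1^2 * (2*real (Suc m)+1) \<le> 16 * 16^m"
    using mp by (simp add: mult_le_cancel_right)
  then show ?case unfolding c1_def by simp
qed

lemma binom_sq_bound: "real (n choose k)^2 * (real n + 1) \<le> 4^n"
proof -
  have mx: "real (n choose k) \<le> real (n choose (n div 2))" using binomial_maximum by simp
  have "real (n choose (n div 2))^2 * (real n + 1) \<le> 4^n"
  proof (cases "even n")
    case True
    then obtain m where n: "n = 2*m" by auto
    have "real (n choose (n div 2))^2 * (real n + 1) = real ((2*m) choose m)^2 * (2*real m+1)"
      using n by simp
    also have "\<dots> \<le> 16^m" by (rule central_binom_sq)
    also have "\<dots> = 4^n" using n by (simp add: power_mult)
    finally show ?thesis .
  next
    case False
    define m where "m = n div 2"
    have n: "n = Suc (2*m)" using False unfolding m_def by presburger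
    have a: "Suc m * (Suc (Suc (2*m)) choose Suc m) = Suc (Suc (2*m)) * (Suc (2*m) choose m)"
      by (rule Suc_times_binomial)
    have a': "(Suc (Suc (2*m)) choose Suc m) = 2 * (Suc (2*m) choose m)"
    proof -
      have e: "Suc (Suc (2*m)) = Suc m * 2" by simp
      from a have "Suc m * (Suc (Suc (2*m)) choose Suc m) = Suc m * (2 * (Suc (2*m) choose m))"
        unfolding e by (simp only: mult.assoc)
      then show ?thesis by (metis Zero_not_Suc mult_left_cancel)
    qed
    have nd: "n div 2 = m" using n by simp
    define c1 where "c1 = real ((2*Suc m) choose Suc m)"
    have "c1 = 2 * real (Suc (2*m) choose m)"
    proof -
      have e2: "2 * Suc m = Suc (Suc (2*m))" by simp
      show ?thesis unfolding c1_def e2 a' by (simp only: of_nat_mult of_nat_numeral)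
    qed
    then have cc: "real (n choose (n div 2)) = c1 / 2" unfolding nd n by simp
    have "real (n choose (n div 2))^2 * (real n + 1) = c1^2 * (2*real m + 2) / 4"
      unfolding cc using n by (simp add: power_divide)
    also have "\<dots> \<le> c1^2 * (2*real (Suc m) + 1) / 4"
      by (intro divide_right_mono mult_left_mono) auto
    also have "\<dots> \<le> 16^(Suc m) / 4" unfolding c1_def
      by (intro divide_right_mono central_binom_sq) auto
    also have "\<dots> = 4^n"
    proof -
      have "(4::real)^n = 4 * 4^(2*m)" using n by simp
      also have "\<dots> = 4 * 16^m" by (simp add: power_mult)
      finally show ?thesis by simp
    qed
    finally show ?thesis .
  qed
  moreover have "real (n choose k)^2 \<le> real (n choose (n div 2))^2" using mx by (intro power_mono) auto
  then have "real (n choose k)^2 * (real n + 1) \<le> real (n choose (n div 2))^2 * (real n + 1)"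
    by (intro mult_right_mono) auto
  ultimately show ?thesis by linarith
qed

lemma binom_bound: "n \<ge> 1 \<Longrightarrow> real (n choose k) \<le> 2^n / sqrt (real n)"
proof -
  assume n: "n \<ge> 1"
  have "real (n choose k)^2 * real n \<le> real (n choose k)^2 * (real n + 1)"
    by (intro mult_left_mono) auto
  then have "real (n choose k)^2 * real n \<le> 4^n" using binom_sq_bound[of n k] by linarith
  moreover have "((2::real)^n)^2 = 4^n" by (simp add: power2_eq_square power_mult_distrib[symmetric])
  ultimately have "real (n choose k)^2 \<le> (2^n / sqrt (real n))^2" using n
    by (simp add: power_divide field_simps)
  then show ?thesis by (rule power2_le_imp_le) auto
qed

declare binomial_Suc_Suc [simp]

lemma local_upper_aux:
  assumes n: "n \<ge> 1"
  shows "n \<le> 2*k \<Longrightarrow> k \<le> n \<Longrightarrow>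
    real (n choose k) * exp ((2*real k - real n)^2/(2*real n)) \<le> exp 13 * 2^n / sqrt (real n)"
proof (induction k)
  case 0 then show ?case using n by simp
next
  case (Suc k)
  define d where "d = 2*real (Suc k) - real n"
  have d0: "d \<ge> 0" using Suc.prems unfolding d_def by simp
  have np: "real n > 0" using n by simp
  show ?case
  proof (cases "d^2 \<le> 26 * real n")
    case True
    have "exp ((2*real (Suc k) - real n)^2/(2*real n)) \<le> exp 13"
      using True np unfolding d_def by (simp add: field_simps)
    moreover have "real (n choose Suc k) \<le> 2^n / sqrt (real n)" by (rule binom_bound[OF n])
    ultimately have "real (n choose Suc k) * exp ((2*real (Suc k) - real n)^2/(2*real n))
        \<le> 2^n / sqrt (real n) * exp 13"
      by (intro mult_mono) auto
    then show ?thesis by (simp add: algebra_simps)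
  next
    case False
    have d2: "d \<ge> 2"
    proof (rule ccontr)
      assume "\<not> d \<ge> 2"
      then have "d * d \<le> 2 * 2" using d0 by (intro mult_mono) auto
      then show False using False n by (simp add: power2_eq_square)
    qed
    have big: "(d - 1)^2 \<ge> 12 * real n"
    proof (rule ccontr)
      assume "\<not> (d - 1)^2 \<ge> 12 * real n"
      moreover have "2*(d-1) \<le> (d-1)^2 + 1" using zero_le_power2[of "d-2"]
        by (simp add: power2_eq_square algebra_simps)
      moreover have "d^2 = (d-1)^2 + 2*(d-1) + 1" by (simp add: power2_eq_square algebra_simps)
      ultimately show False using False n by linarith
    qed
    have k1: "n \<le> 2*k" using d2 unfolding d_def by simp
    have "real (n choose Suc k) * exp ((2*real (Suc k) - real n)^2/(2*real n))
      \<le> real (n choose (Suc k - 1)) * exp ((2*real (Suc k - 1) - real n)^2/(2*real n))"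
      by (rule ratio_step[OF n]) (use Suc.prems k1 big in \<open>auto simp: d_def add_diff_eq\<close>)
    also have "\<dots> \<le> exp 13 * 2^n / sqrt (real n)" using Suc.IH k1 Suc.prems by simp
    finally show ?thesis .
  qed
qed

lemma fnk_bound:
  assumes n: "n \<ge> 1" and k: "k \<le> n"
  shows "fnk n k \<le> exp 13 / sqrt (real n) * exp (- ((znk n k)^2) / 2)"
proof -
  have np: "real n > 0" using n by simp
  have key: "real (n choose k) * exp ((2*real k - real n)^2/(2*real n)) \<le> exp 13 * 2^n / sqrt (real n)"
  proof (cases "n \<le> 2*k")
    case True then show ?thesis using local_upper_aux[OF n] k by blast
  next
    case False
    have "real (n choose (n-k)) * exp ((2*real (n-k) - real n)^2/(2*real n)) \<le> exp 13 * 2^n / sqrt (real n)"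
      using local_upper_aux[OF n, of "n-k"] False by auto
    moreover have "n choose (n-k) = n choose k" using binomial_symmetric[OF k] by simp
    moreover have "(2*real (n-k) - real n)^2 = (2*real k - real n)^2" using k
      by (simp add: of_nat_diff power2_eq_square algebra_simps)
    ultimately show ?thesis by simp
  qed
  have z: "(znk n k)^2 = (2*real k - real n)^2 / real n"
    unfolding znk_def using np by (simp add: power_divide)
  have "fnk n k = real (n choose k) * exp ((2*real k - real n)^2/(2*real n)) / 2^n
      * exp (- ((2*real k - real n)^2)/(2*real n))"
    unfolding fnk_def by (simp add: exp_minus field_simps)
  also have "\<dots> \<le> exp 13 * 2^n / sqrt (real n) / 2^n * exp (- ((2*real k - real n)^2)/(2*real n))"
    using key by (intro mult_right_mono divide_right_mono) auto
  also have "\<dots> = exp 13 / sqrt (real n) * exp (- ((znk n k)^2) / 2)"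
    unfolding z by (simp add: field_simps)
  finally show ?thesis .
qed




context
  fixes U :: "real \<Rightarrow> real"
  assumes U: "utility_function U"
begin

lemma U_diff: "x > 0 \<Longrightarrow> (U has_real_derivative deriv U x) (at x)"
proof -
  assume "x > 0"
  then have "((deriv ^^ 0) U) differentiable (at x)" using U unfolding utility_function_def by blast
  then show ?thesis by (simp add: DERIV_deriv_iff_real_differentiable)
qed

lemma U_negconv: "convex_on {0<..} (\<lambda>x. - U x)"
proof (rule convex_onI)
  show "convex ({0<..} :: real set)" by simp
  fix t x y :: real assume t: "0 < t" "t < 1" and xy: "x \<in> {0<..}" "y \<in> {0<..}"
  show "- U ((1 - t) *\<^sub>R x + t *\<^sub>R y) \<le> (1 - t) * - U x + t * - U y"
  proof (cases "x = y")
    case True then show ?thesis by (simp add: algebra_simps)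
  next
    case False
    have sc: "\<forall>x y t. 0 < x \<longrightarrow> 0 < y \<longrightarrow> x \<noteq> y \<longrightarrow> 0 < t \<longrightarrow> t < 1 \<longrightarrow>
        t * U x + (1 - t) * U y < U (t * x + (1 - t) * y)"
      using U unfolding utility_function_def by blast
    have "(1-t) * U x + (1 - (1-t)) * U y < U ((1-t) * x + (1 - (1-t)) * y)"
      using sc[rule_format, of x y "1-t"] xy t False by simp
    then show ?thesis by (simp add: algebra_simps)
  qed
qed

lemma U_tangent: "x0 > 0 \<Longrightarrow> x > 0 \<Longrightarrow> U x \<le> U x0 + deriv U x0 * (x - x0)"
proof -
  assume x0: "x0 > 0" and x: "x > 0"
  have "((\<lambda>x. - U x) has_field_derivative - deriv U x0) (at x0 within {0<..})"
    by (rule has_field_derivative_at_within[OF DERIV_minus[OF U_diff[OF x0]]])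
  then have "(\<lambda>x. - U x) x - (\<lambda>x. - U x) x0 \<ge> - deriv U x0 * (x - x0)"
    by (intro convex_on_imp_above_tangent[OF U_negconv]) (use x0 x in \<open>auto simp: interior_open\<close>)
  then show ?thesis by (simp add: algebra_simps)
qed

lemma V_bdd: "z > 0 \<Longrightarrow> \<exists>B. \<forall>x>0. U x - x*z \<le> B"
proof -
  assume z: "z > 0"
  have "(deriv U \<longlongrightarrow> 0) at_top" using U unfolding utility_function_def by blast
  then have "eventually (\<lambda>x. dist (deriv U x) 0 < z) at_top" using z by (rule tendstoD)
  then obtain N where N: "\<And>x. x \<ge> N \<Longrightarrow> dist (deriv U x) 0 < z" by (auto simp: eventually_at_top_linorder)
  define x0 where "x0 = max N 1"
  have x0: "x0 > 0" "deriv U x0 < z" using N[of x0] by (auto simp: x0_def dist_real_def)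
  show ?thesis
  proof (intro exI allI impI)
    fix x :: real assume x: "x > 0"
    have "U x - x*z \<le> U x0 + deriv U x0 * (x - x0) - x*z" using U_tangent[OF x0(1) x] by simp
    also have "\<dots> = U x0 - deriv U x0 * x0 + x * (deriv U x0 - z)" by (simp add: algebra_simps)
    also have "\<dots> \<le> U x0 - deriv U x0 * x0" using x x0 by (simp add: mult_nonneg_nonpos)
    finally show "U x - x*z \<le> U x0 - deriv U x0 * x0" .
  qed
qed

lemma V_bdd_above: "z > 0 \<Longrightarrow> bdd_above ((\<lambda>x. U x - x*z) ` {0<..})"
proof -
  assume "z > 0"
  then obtain B where B: "\<forall>x>0. U x - x*z \<le> B" using V_bdd by blast
  show ?thesis by (rule bdd_aboveI2[where M=B]) (use B in auto)
qed

lemma V_ge: "z > 0 \<Longrightarrow> x > 0 \<Longrightarrow> U x - x*z \<le> conj_fun U z"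
  unfolding conj_fun_def by (rule cSUP_upper) (auto intro: V_bdd_above)

lemma V_le: "(\<And>x. x > 0 \<Longrightarrow> U x - x*z \<le> B) \<Longrightarrow> conj_fun U z \<le> B"
  unfolding conj_fun_def by (rule cSUP_least) auto

lemma V_mono: "0 < z1 \<Longrightarrow> z1 \<le> z2 \<Longrightarrow> conj_fun U z2 \<le> conj_fun U z1"
proof (rule V_le)
  fix x :: real assume "0 < z1" "z1 \<le> z2" "x > 0"
  then have "U x - x*z2 \<le> U x - x*z1" by (simp add: mult_left_mono)
  also have "\<dots> \<le> conj_fun U z1" using V_ge \<open>0 < z1\<close> \<open>x > 0\<close> by blast
  finally show "U x - x*z2 \<le> conj_fun U z1" .
qed

lemma V_lower: "z > 0 \<Longrightarrow> U 1 - z \<le> conj_fun U z"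
  using V_ge[of z 1] by simp

lemma V_convex: "convex_on {0<..} (conj_fun U)"
proof (rule convex_onI)
  show "convex ({0<..} :: real set)" by simp
  fix t a b :: real assume t: "0 < t" "t < 1" and ab: "a \<in> {0<..}" "b \<in> {0<..}"
  show "conj_fun U ((1 - t) *\<^sub>R a + t *\<^sub>R b) \<le> (1 - t) * conj_fun U a + t * conj_fun U b"
  proof (simp, rule V_le)
    fix x :: real assume x: "x > 0"
    have "U x - x * ((1 - t) * a + t * b) = (1-t) * (U x - x*a) + t * (U x - x*b)"
      by (simp add: algebra_simps)
    also have "\<dots> \<le> (1-t) * conj_fun U a + t * conj_fun U b"
      using V_ge[of a x] V_ge[of b x] ab x t by (intro add_mono mult_left_mono) auto
    finally show "U x - x * ((1 - t) * a + t * b) \<le> (1-t) * conj_fun U a + t * conj_fun U b" .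
  qed
qed

lemma V_cont: "continuous_on {0<..} (conj_fun U)"
  using convex_on_continuous[OF open_greaterThan V_convex] .

end




lemma phi_std: "phi x = std_normal_density x"
  unfolding phi_def std_normal_density_def by simp

lemma phi_pos: "phi x > 0" unfolding phi_def by simp

lemma integrable_phi: "integrable lborel phi"
  unfolding phi_std[abs_def] by simp

lemma phi_shift: "exp (- x/2 - 1/8) * phi x = normal_density (-1/2) 1 x"
proof -
  have "exp (- x/2 - 1/8) * exp (- (x^2)/2) = exp ((- x/2 - 1/8) + (- (x^2)/2))" by (rule exp_add[symmetric])
  also have "(- x/2 - 1/8) + (- (x^2)/2) = - ((x - (-1/2))^2) / (2 * 1^2)" by (simp add: power2_eq_square field_simps)
  finally show ?thesis unfolding phi_def normal_density_def by simp
qed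

lemma integrable_exp_phi: "integrable lborel (\<lambda>x. exp (- x/2 - 1/8) * phi x)"
  unfolding phi_shift by simp

context
  fixes U :: "real \<Rightarrow> real" and y :: real and H :: "real \<Rightarrow> real"
  assumes U: "utility_function U" and y: "y > 0"
    and H: "H = (\<lambda>x. conj_fun U (y * exp (- x / 2 - 1 / 8)))"
begin

lemma H_mono: "a \<le> b \<Longrightarrow> H a \<le> H b"
  unfolding H using y by (intro V_mono[OF U]) auto

lemma H_lower: "U 1 - y * exp (- x / 2 - 1 / 8) \<le> H x"
  unfolding H using y by (intro V_lower[OF U]) auto

lemma H_cont: "continuous_on UNIV H"
  unfolding H
  by (rule continuous_on_compose2[OF V_cont[OF U]]) (use y in \<open>auto intro!: continuous_intros\<close>)

lemma H_isCont: "isCont H x"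
  using H_cont by (simp add: continuous_on_eq_continuous_at)

lemma H_meas[measurable]: "H \<in> borel_measurable borel"
  using H_cont by (rule borel_measurable_continuous_onI)

lemma Hphi_integrable:
  assumes fin: "(\<integral>\<^sup>+ x. ennreal (H x * phi x) \<partial>lborel) < \<infinity>"
  shows "integrable lborel (\<lambda>x. H x * phi x)"
proof -
  have m: "(\<lambda>x. H x * phi x) \<in> borel_measurable lborel" unfolding phi_def by measurable
  have ip: "integrable lborel (\<lambda>x. max 0 (H x * phi x))"
    unfolding integrable_iff_bounded using m fin by (auto simp: ennreal_max_0)
  have in2: "integrable lborel (\<lambda>x. \<bar>U 1\<bar> * phi x + y * (exp (- x/2 - 1/8) * phi x))"
    using integrable_phi integrable_exp_phi by auto
  have "integrable lborel (\<lambda>x. min 0 (H x * phi x))"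
  proof (rule Bochner_Integration.integrable_bound[OF in2])
    show "(\<lambda>x. min 0 (H x * phi x)) \<in> borel_measurable lborel" using m by measurable
    show "AE x in lborel. norm (min 0 (H x * phi x)) \<le> norm (\<bar>U 1\<bar> * phi x + y * (exp (- x/2 - 1/8) * phi x))"
    proof (rule AE_I2)
      fix x
      have p: "phi x > 0" by (rule phi_pos)
      have "- H x \<le> \<bar>U 1\<bar> + y * exp (- x/2 - 1/8)" using H_lower[of x] by linarith
      then have "- H x * phi x \<le> (\<bar>U 1\<bar> + y * exp (- x/2 - 1/8)) * phi x"
        using p by (intro mult_right_mono) auto
      then have "- (H x * phi x) \<le> (\<bar>U 1\<bar> + y * exp (- x/2 - 1/8)) * phi x" by simp
      then show "norm (min 0 (H x * phi x)) \<le> norm (\<bar>U 1\<bar> * phi x + y * (exp (- x/2 - 1/8) * phi x))"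
        using p y by (auto simp: algebra_simps min_def)
    qed
  qed
  from Bochner_Integration.integrable_add[OF ip this]
  have "integrable lborel (\<lambda>x. max 0 (H x * phi x) + min 0 (H x * phi x))" .
  moreover have "(\<lambda>x. max 0 (H x * phi x) + min 0 (H x * phi x)) = (\<lambda>x. H x * phi x)"
    by (auto simp: max_def min_def)
  ultimately show ?thesis by simp
qed

end




lemma phi_ratio:
  assumes "0 \<le> z" "z \<le> x" "x \<le> z + d" "z*d \<le> 2" "d^2 \<le> 4" "d \<ge> 0"
  shows "phi z \<le> exp 4 * phi x"
proof -
  have "x^2 \<le> (z+d)^2" using assms by (intro power_mono) auto
  also have "\<dots> = z^2 + 2*(z*d) + d^2" by (simp add: power2_eq_square algebra_simps)
  finally have "x^2 \<le> z^2 + 8" using assms by linarith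
  then have "- (z^2)/2 \<le> 4 + - (x^2)/2" by simp
  then have "exp (- (z^2)/2) \<le> exp (4 + - (x^2)/2)" by simp
  moreover have "exp (4 + - (x^2)/2) = exp 4 * exp (- (x^2)/2)" by (rule exp_add)
  ultimately have "exp (- (z^2)/2) \<le> exp 4 * exp (- (x^2)/2)" by linarith
  then have "exp (- (z^2)/2) / sqrt (2*pi) \<le> exp 4 * exp (- (x^2)/2) / sqrt (2*pi)"
    by (intro divide_right_mono) auto
  then show ?thesis unfolding phi_def by simp
qed

lemma znk_step: "n \<ge> 1 \<Longrightarrow> znk n (Suc k) = znk n k + 2 / sqrt (real n)"
  unfolding znk_def by (simp add: field_simps)

lemma znk_mono: "n \<ge> 1 \<Longrightarrow> k1 \<le> k2 \<Longrightarrow> znk n k1 \<le> znk n k2"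
  unfolding znk_def by (simp add: divide_right_mono)

lemma znk_le: "n \<ge> 1 \<Longrightarrow> k \<le> n \<Longrightarrow> znk n k \<le> sqrt (real n)"
proof -
  assume n: "n \<ge> 1" and k: "k \<le> n"
  have "znk n k \<le> real n / sqrt (real n)" unfolding znk_def using k by (intro divide_right_mono) auto
  also have "\<dots> = sqrt (real n)" using n by (simp add: real_div_sqrt)
  finally show ?thesis .
qed

lemma ind_sum_le1:
  assumes n: "n \<ge> 1"
  shows "(\<Sum>k\<le>n. indicator {znk n k ..< znk n k + 2 / sqrt (real n)} x) \<le> (1::real)"
proof -
  define S where "S = {k. x \<in> {znk n k ..< znk n k + 2 / sqrt (real n)}}"
  have "(\<Sum>k\<le>n. indicator {znk n k ..< znk n k + 2 / sqrt (real n)} x) = (\<Sum>k\<le>n. (indicator S k :: real))"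
    unfolding S_def by (intro sum.cong) (auto simp: indicator_def)
  also have "\<dots> = real (\<Sum>k\<le>n. (indicator S k :: nat))" by (simp add: indicator_def of_nat_sum)
  also have "(\<Sum>k\<le>n. (indicator S k :: nat)) = card ({..n} \<inter> S)" by (rule sum_indicator_eq_card) simp
  also have "card ({..n} \<inter> S) \<le> Suc 0"
  proof (subst card_le_Suc0_iff_eq, simp, intro ballI)
    have *: False if "k1 < k2" "k1 \<in> S" "k2 \<in> S" for k1 k2
    proof -
      have "znk n k2 \<ge> znk n (Suc k1)" using that by (intro znk_mono[OF n]) auto
      then show False using that znk_step[OF n, of k1] by (auto simp: S_def)
    qed
    fix a1 a2 assume "a1 \<in> {..n} \<inter> S" "a2 \<in> {..n} \<inter> S"
    then show "a1 = a2" using *[of a1 a2] *[of a2 a1] by (cases a1 a2 rule: linorder_cases) auto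
  qed
  finally show ?thesis by simp
qed

lemma riemann_bound:
  fixes g :: "real \<Rightarrow> real"
  assumes mono: "\<And>a b. a \<le> b \<Longrightarrow> g a \<le> g b" and g0: "\<And>x. g x \<ge> 0"
    and gz: "\<And>x. x \<le> 0 \<Longrightarrow> g x = 0"
    and int: "integrable lborel (\<lambda>x. g x * phi x)" and n: "n \<ge> 1"
  shows "(\<Sum>k\<le>n. g (znk n k) * fnk n k) \<le> exp 17 * sqrt (2*pi) * (\<integral>x. g x * phi x \<partial>lborel)"
proof -
  define d where "d = 2 / sqrt (real n)"
  define I where "I k = {znk n k ..< znk n k + d}" for k
  have np: "real n \<ge> 1" using n by simp
  have sn: "sqrt (real n) \<ge> 1" using np by simp
  have d0: "d > 0" unfolding d_def using sn by simp
  have intI: "integrable lborel (\<lambda>x. indicator (I k) x * (g x * phi x))" for k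
    using integrable_real_mult_indicator[OF _ int, of "I k"] by (simp add: I_def mult.commute)
  have step: "g (znk n k) * fnk n k \<le> exp 17 * sqrt (2*pi) * (\<integral>x. indicator (I k) x * (g x * phi x) \<partial>lborel)"
    if k: "k \<le> n" for k
  proof (cases "g (znk n k) = 0")
    case True
    have "(\<integral>x. indicator (I k) x * (g x * phi x) \<partial>lborel) \<ge> 0"
      using g0 phi_pos by (intro integral_nonneg_AE AE_I2) (auto simp: indicator_def less_imp_le)
    then show ?thesis using True by simp
  next
    case False
    define z where "z = znk n k"
    have z0: "z > 0"
    proof (rule ccontr)
      assume "\<not> z > 0"
      then have "g z = 0" by (intro gz) simp
      with False show False by (simp add: z_def)
    qed
    have zs: "z \<le> sqrt (real n)" unfolding z_def by (rule znk_le[OF n k])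
    have zd: "z * d \<le> 2" unfolding d_def using zs sn by (simp add: field_simps)
    have dd: "d^2 \<le> 4" unfolding d_def using np by (simp add: power_divide field_simps)
    have gz0: "g z \<ge> 0" by (rule g0)
    have f: "fnk n k \<le> exp 13 * sqrt (2*pi) / sqrt (real n) * phi z"
    proof -
      have "fnk n k \<le> exp 13 / sqrt (real n) * exp (- (z^2) / 2)" unfolding z_def by (rule fnk_bound[OF n k])
      also have "\<dots> = exp 13 * sqrt (2*pi) / sqrt (real n) * phi z" unfolding phi_def by simp
      finally show ?thesis .
    qed
    have pt: "indicator (I k) x * (g z * phi z) \<le> exp 4 * (indicator (I k) x * (g x * phi x))" for x
    proof (cases "x \<in> I k")
      case True
      then have x: "z \<le> x" "x \<le> z + d" by (auto simp: I_def z_def)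
      have "g z \<le> g x" using mono x by blast
      moreover have "phi z \<le> exp 4 * phi x" using phi_ratio[OF _ x zd dd] z0 d0 by auto
      ultimately have "g z * phi z \<le> g x * (exp 4 * phi x)"
        using gz0 phi_pos[of z] by (intro mult_mono) (auto simp: less_imp_le)
      then show ?thesis using True by (simp add: algebra_simps)
    qed simp
    have ii: "integrable lborel (indicat_real (I k))"
      using d0 by (simp add: I_def integrable_indicator_iff)
    have eqd: "(\<integral>x. indicator (I k) x * (g z * phi z) \<partial>lborel) = d * (g z * phi z)"
      using d0 by (simp add: I_def measure_def)
    have le: "(\<integral>x. indicator (I k) x * (g z * phi z) \<partial>lborel) \<le> (\<integral>x. exp 4 * (indicator (I k) x * (g x * phi x)) \<partial>lborel)"
      using pt intI[of k] ii by (intro integral_mono) auto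
    have A: "d * (g z * phi z) \<le> exp 4 * (\<integral>x. indicator (I k) x * (g x * phi x) \<partial>lborel)"
    proof -
      have "(\<integral>x. exp 4 * (indicator (I k) x * (g x * phi x)) \<partial>lborel) = exp 4 * (\<integral>x. indicator (I k) x * (g x * phi x) \<partial>lborel)"
        by simp
      then show ?thesis using eqd le by linarith
    qed
    have "g z * fnk n k \<le> g z * (exp 13 * sqrt (2*pi) / sqrt (real n) * phi z)"
      using f gz0 by (intro mult_left_mono) auto
    also have "\<dots> = exp 13 * sqrt (2*pi) / 2 * (d * (g z * phi z))" unfolding d_def by (simp add: field_simps)
    also have "\<dots> \<le> exp 13 * sqrt (2*pi) / 2 * (exp 4 * (\<integral>x. indicator (I k) x * (g x * phi x) \<partial>lborel))"
      using A by (intro mult_left_mono) auto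
    also have "\<dots> = exp 17 * sqrt (2*pi) / 2 * (\<integral>x. indicator (I k) x * (g x * phi x) \<partial>lborel)"
    proof -
      have "exp (13::real) * exp 4 = exp 17" by (simp add: mult_exp_exp)
      then show ?thesis by (simp add: field_simps)
    qed
    also have "\<dots> \<le> exp 17 * sqrt (2*pi) * (\<integral>x. indicator (I k) x * (g x * phi x) \<partial>lborel)"
    proof -
      have "(\<integral>x. indicator (I k) x * (g x * phi x) \<partial>lborel) \<ge> 0"
        using g0 phi_pos by (intro integral_nonneg_AE AE_I2) (auto simp: indicator_def less_imp_le)
      then show ?thesis by (intro mult_right_mono) auto
    qed
    finally show ?thesis unfolding z_def .
  qed
  have "(\<Sum>k\<le>n. g (znk n k) * fnk n k) \<le> (\<Sum>k\<le>n. exp 17 * sqrt (2*pi) * (\<integral>x. indicator (I k) x * (g x * phi x) \<partial>lborel))"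
    using step by (intro sum_mono) auto
  also have "\<dots> = exp 17 * sqrt (2*pi) * (\<integral>x. (\<Sum>k\<le>n. indicator (I k) x * (g x * phi x)) \<partial>lborel)"
    by (subst Bochner_Integration.integral_sum) (use intI in \<open>auto simp: sum_distrib_left\<close>)
  also have "\<dots> \<le> exp 17 * sqrt (2*pi) * (\<integral>x. g x * phi x \<partial>lborel)"
  proof (intro mult_left_mono integral_mono)
    show "integrable lborel (\<lambda>x. \<Sum>k\<le>n. indicator (I k) x * (g x * phi x))" by (rule Bochner_Integration.integrable_sum) (rule intI)
    show "integrable lborel (\<lambda>x. g x * phi x)" by (rule int)
    fix x
    have "(\<Sum>k\<le>n. indicator (I k) x * (g x * phi x)) = (\<Sum>k\<le>n. indicator (I k) x) * (g x * phi x)"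
      by (simp add: sum_distrib_right)
    also have "\<dots> \<le> 1 * (g x * phi x)"
      using ind_sum_le1[OF n, of x] g0[of x] phi_pos[of x] unfolding I_def d_def
      by (intro mult_right_mono) auto
    finally show "(\<Sum>k\<le>n. indicator (I k) x * (g x * phi x)) \<le> g x * phi x" by simp
  qed auto
  finally show ?thesis .
qed




lemma cos_lim_pos: "(t::real) > 0 \<Longrightarrow> ((\<lambda>n::nat. cos (t / sqrt (real n)) ^ n) \<longlongrightarrow> exp (-(t*t/2))) at_top"
  by real_asymp

lemma cos_lim: "(\<lambda>n::nat. cos (t / sqrt (real n)) ^ n) \<longlonglongrightarrow> exp (-(t^2)/2)"
proof -
  consider "t > 0" | "t = 0" | "t < 0" by linarith
  then show ?thesis
  proof cases
    case 1 then show ?thesis using cos_lim_pos[of t] by (simp add: power2_eq_square)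
  next
    case 2 then show ?thesis by simp
  next
    case 3
    have "(\<lambda>n::nat. cos ((-t) / sqrt (real n)) ^ n) \<longlonglongrightarrow> exp (-((-t)*(-t)/2))"
      using cos_lim_pos[of "-t"] 3 by simp
    then show ?thesis by (simp add: power2_eq_square)
  qed
qed

definition mu :: "nat \<Rightarrow> real measure" where
  "mu n = distr (measure_pmf (binomial_pmf n (1/2))) borel (znk n)"

lemma real_distribution_mu: "real_distribution (mu n)"
  unfolding mu_def real_distribution_def real_distribution_axioms_def
  by (auto intro!: measure_pmf.prob_space_distr)

lemma fnk_alt: "k \<le> n \<Longrightarrow> real (n choose k) * (1/2)^k * (1 - 1/2)^(n-k) = fnk n k"
proof -
  assume k: "k \<le> n"
  have "(1/2::real)^k * (1/2)^(n-k) = (1/2)^(k + (n-k))" by (simp add: power_add)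
  also have "k + (n-k) = n" using k by simp
  finally have "(1/2::real)^k * (1/2)^(n-k) = 1 / 2^n" by (simp add: power_one_over)
  then show ?thesis unfolding fnk_def by (simp add: mult.assoc)
qed

lemma integral_mu:
  fixes f :: "real \<Rightarrow> 'b::{banach, second_countable_topology}"
  assumes [measurable]: "f \<in> borel_measurable borel"
  shows "integral\<^sup>L (mu n) f = (\<Sum>k\<le>n. fnk n k *\<^sub>R f (znk n k))"
proof -
  have "integral\<^sup>L (mu n) f = measure_pmf.expectation (binomial_pmf n (1/2)) (\<lambda>k. f (znk n k))"
    unfolding mu_def by (rule integral_distr) auto
  also have "\<dots> = (\<Sum>k\<le>n. (real (n choose k) * (1/2) ^ k * (1 - 1/2) ^ (n - k)) *\<^sub>R f (znk n k))"
    by (rule expectation_binomial_pmf') auto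
  also have "\<dots> = (\<Sum>k\<le>n. fnk n k *\<^sub>R f (znk n k))"
    by (intro sum.cong refl) (simp only: fnk_alt atMost_iff)
  finally show ?thesis .
qed

lemma char_mu:
  assumes n: "n \<ge> 1"
  shows "char (mu n) t = complex_of_real (cos (t / sqrt (real n)) ^ n)"
proof -
  define s where "s = t / sqrt (real n)"
  have np: "real n > 0" using n by simp
  have "char (mu n) t = (\<Sum>k\<le>n. fnk n k *\<^sub>R iexp (t * znk n k))"
    unfolding char_def by (rule integral_mu) measurable
  also have "\<dots> = (\<Sum>k\<le>n. of_nat (n choose k) * cis s ^ k * cis (-s) ^ (n-k)) / 2^n"
    unfolding sum_divide_distrib
  proof (intro sum.cong refl)
    fix k assume "k \<in> {..n}"
    then have k: "k \<le> n" by simp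
    have "t * znk n k = real k * s + real (n-k) * (-s)"
      unfolding znk_def s_def using k np by (simp add: of_nat_diff field_simps)
    note eq = this
    have "iexp (t * znk n k) = cis (t * znk n k)" by (simp add: cis_conv_exp)
    also have "\<dots> = cis (real k * s + real (n-k) * (-s))" by (simp only: eq)
    also have "\<dots> = cis (real k * s) * cis (real (n-k) * (-s))" by (simp only: cis_mult)
    also have "\<dots> = cis s ^ k * cis (-s) ^ (n-k)"
      using Complex.DeMoivre[of s k] Complex.DeMoivre[of "-s" "n-k"] by simp
    finally have "iexp (t * znk n k) = cis s ^ k * cis (-s) ^ (n-k)" .
    then show "fnk n k *\<^sub>R iexp (t * znk n k) = of_nat (n choose k) * cis s ^ k * cis (-s) ^ (n-k) / 2^n"
      unfolding fnk_def by (simp add: scaleR_conv_of_real field_simps)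
  qed
  also have "\<dots> = (cis s + cis (-s))^n / 2^n"
    by (subst binomial_ring) (simp add: atLeast0AtMost)
  also have "cis s + cis (-s) = 2 * complex_of_real (cos s)"
    by (simp add: complex_eq_iff)
  also have "(2 * complex_of_real (cos s))^n / 2^n = complex_of_real (cos s ^ n)"
    by (simp add: power_mult_distrib)
  finally show ?thesis unfolding s_def .
qed

lemma weak_mu: "weak_conv_m mu std_normal_distribution"
proof (rule levy_continuity[OF real_distribution_mu real_dist_normal_dist])
  fix t
  have "(\<lambda>n. complex_of_real (cos (t / sqrt (real n)) ^ n)) \<longlonglongrightarrow> complex_of_real (exp (-(t^2)/2))"
    by (rule tendsto_of_real[OF cos_lim])
  moreover have "eventually (\<lambda>n. complex_of_real (cos (t / sqrt (real n)) ^ n) = char (mu n) t) sequentially"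
    using eventually_ge_at_top[of 1] by eventually_elim (simp add: char_mu)
  ultimately show "(\<lambda>n. char (mu n) t) \<longlonglongrightarrow> char std_normal_distribution t"
    unfolding char_std_normal_distribution by (rule Lim_transform_eventually)
qed

lemma binom_limit:
  fixes g :: "real \<Rightarrow> real"
  assumes cont: "\<And>x. isCont g x" and bdd: "\<And>x. \<bar>g x\<bar> \<le> B"
  shows "(\<lambda>n. \<Sum>k\<le>n. g (znk n k) * fnk n k) \<longlonglongrightarrow> (\<integral>x. g x * phi x \<partial>lborel)"
proof -
  have gm[measurable]: "g \<in> borel_measurable borel"
    by (intro borel_measurable_continuous_onI continuous_at_imp_continuous_on) (use cont in auto)
  have "(\<lambda>n. integral\<^sup>L (mu n) g) \<longlonglongrightarrow> integral\<^sup>L std_normal_distribution g"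
    using cont bdd by (intro weak_conv_imp_integral_bdd_continuous_conv[OF real_distribution_mu real_dist_normal_dist weak_mu]) auto
  moreover have "integral\<^sup>L (mu n) g = (\<Sum>k\<le>n. g (znk n k) * fnk n k)" for n
    by (subst integral_mu) (auto simp: mult.commute)
  moreover have "integral\<^sup>L std_normal_distribution g = (\<integral>x. g x * phi x \<partial>lborel)"
    by (subst integral_density) (auto simp: phi_std mult.commute)
  ultimately show ?thesis by simp
qed




lemma znk_rev: "k \<le> n \<Longrightarrow> znk n (n - k) = - znk n k"
  unfolding znk_def by (simp add: of_nat_diff minus_divide_left)

lemma fnk_rev: "k \<le> n \<Longrightarrow> fnk n (n - k) = fnk n k"
  unfolding fnk_def by (simp add: binomial_symmetric[symmetric])

lemma phi_even: "phi (-x) = phi x" unfolding phi_def by simp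

lemma sum_rev: fixes f :: "nat \<Rightarrow> real" shows "(\<Sum>k\<le>n. f (n - k)) = (\<Sum>k\<le>n. f k)"
  using sum.atLeastAtMost_rev[of f 0 n] by (simp add: atLeast0AtMost)

lemma dom_to_zero:
  fixes g :: "real \<Rightarrow> real \<Rightarrow> real" and w :: "real \<Rightarrow> real"
  assumes [measurable]: "\<And>M. g M \<in> borel_measurable borel" and w: "integrable lborel w"
    and bound: "\<And>M x. M \<ge> 0 \<Longrightarrow> \<bar>g M x\<bar> \<le> w x"
    and ev0: "\<And>x. eventually (\<lambda>M. g M x = 0) at_top"
  shows "((\<lambda>M. \<integral>x. g M x \<partial>lborel) \<longlongrightarrow> 0) at_top"
proof -
  have "((\<lambda>M. \<integral>x. g M x \<partial>lborel) \<longlongrightarrow> (\<integral>(x::real). 0 \<partial>lborel)) at_top"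
  proof (rule Bochner_Integration.integral_dominated_convergence_at_top[where s=g and f="\<lambda>x. 0" and M=lborel and w=w])
    show "(\<lambda>x. 0::real) \<in> borel_measurable lborel" by simp
    show "\<And>t. g t \<in> borel_measurable lborel" by simp
    show "integrable lborel w" by (rule w)
    show "AE x in lborel. ((\<lambda>i. g i x) \<longlongrightarrow> 0) at_top"
      by (intro AE_I2 tendsto_eventually ev0)
    show "\<forall>\<^sub>F i in at_top. AE x in lborel. norm (g i x) \<le> w x"
      using eventually_ge_at_top[of "0::real"] by eventually_elim (auto intro: bound)
  qed
  then show ?thesis by simp
qed

theorem mainTheorem7:
  fixes U :: "real \<Rightarrow> real" and y :: real and H :: "real \<Rightarrow> real"
  assumes "utility_function U"
    and "y > 0"
    and "H = (\<lambda>x. conj_fun U (y * exp (- x / 2 - 1 / 8)))"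
    and "(\<integral>\<^sup>+ x. ennreal (H x * phi x) \<partial>lborel) < \<infinity>"
  shows "(\<forall>\<epsilon>>0. \<exists>M>0. \<forall>n\<ge>1.
            (\<Sum>k\<le>n. (if H (znk n k) > M then H (znk n k) else 0) * fnk n k) < \<epsilon> \<and>
            (\<Sum>k\<le>n. (if H (znk n k) < - M then \<bar>H (znk n k)\<bar> else 0) * fnk n k) < \<epsilon>)
       \<and> limsup (\<lambda>n. ereal (\<Sum>k\<le>n. H (znk n k) * fnk n k))
           \<le> ereal (\<integral> x. H x * phi x \<partial>lborel)"
proof -
  note U = assms(1) and y = assms(2) and Hdef = assms(3)
  have Hm[measurable]: "H \<in> borel_measurable borel" by (rule H_meas[OF U y Hdef])
  have Hmono: "\<And>a b. a \<le> b \<Longrightarrow> H a \<le> H b" by (rule H_mono[OF U y Hdef])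
  have Hcont: "\<And>x. isCont H x" by (rule H_isCont[OF U y Hdef])
  have phm[measurable]: "phi \<in> borel_measurable borel" unfolding phi_def by measurable
  have intH: "integrable lborel (\<lambda>x. H x * phi x)" by (rule Hphi_integrable[OF U y Hdef assms(4)])
  have intA: "integrable lborel (\<lambda>x. \<bar>H x\<bar> * phi x)"
  proof -
    have "integrable lborel (\<lambda>x. \<bar>H x * phi x\<bar>)" using intH by (rule integrable_abs)
    moreover have "\<bar>H x * phi x\<bar> = \<bar>H x\<bar> * phi x" for x using phi_pos[of x] by (simp add: abs_mult)
    ultimately show ?thesis by simp
  qed
  define C where "C = exp 17 * sqrt (2*pi)"
  have C0: "C > 0" unfolding C_def by simp
  define gp where "gp M x = (if H x > M then H x else 0)" for M x
  define gn where "gn M x = (if H x < - M then - H x else 0)" for M x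
  have gpm[measurable]: "gp M \<in> borel_measurable borel" for M unfolding gp_def by measurable
  have gnm[measurable]: "gn M \<in> borel_measurable borel" for M unfolding gn_def by measurable
  have gp_bd: "\<bar>gp M x * phi x\<bar> \<le> \<bar>H x\<bar> * phi x" if "M \<ge> 0" for M x
    using phi_pos[of x] that by (auto simp: gp_def abs_mult)
  have gn_bd: "\<bar>gn M x * phi x\<bar> \<le> \<bar>H x\<bar> * phi x" if "M \<ge> 0" for M x
    using phi_pos[of x] that by (auto simp: gn_def abs_mult)
  have int_gp: "integrable lborel (\<lambda>x. gp M x * phi x)" if "M \<ge> 0" for M
    by (rule Bochner_Integration.integrable_bound[OF intA]) (use gp_bd[OF that] in \<open>auto simp: abs_mult abs_of_pos[OF phi_pos]\<close>)
  have int_gn: "integrable lborel (\<lambda>x. gn M x * phi x)" if "M \<ge> 0" for M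
    by (rule Bochner_Integration.integrable_bound[OF intA]) (use gn_bd[OF that] in \<open>auto simp: abs_mult abs_of_pos[OF phi_pos]\<close>)
  define Gp where "Gp M = (\<integral>x. gp M x * phi x \<partial>lborel)" for M
  define Gn where "Gn M = (\<integral>x. gn M x * phi x \<partial>lborel)" for M
  have Gp0: "(Gp \<longlongrightarrow> 0) at_top" unfolding Gp_def
  proof (rule dom_to_zero[OF _ intA])
    show "\<And>M x. 0 \<le> M \<Longrightarrow> \<bar>gp M x * phi x\<bar> \<le> \<bar>H x\<bar> * phi x" by (rule gp_bd)
    fix x show "eventually (\<lambda>M. gp M x * phi x = 0) at_top"
      using eventually_ge_at_top[of "\<bar>H x\<bar>"] by eventually_elim (auto simp: gp_def)
  qed simp
  have Gn0: "(Gn \<longlongrightarrow> 0) at_top" unfolding Gn_def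
  proof (rule dom_to_zero[OF _ intA])
    show "\<And>M x. 0 \<le> M \<Longrightarrow> \<bar>gn M x * phi x\<bar> \<le> \<bar>H x\<bar> * phi x" by (rule gn_bd)
    fix x show "eventually (\<lambda>M. gn M x * phi x = 0) at_top"
      using eventually_ge_at_top[of "\<bar>H x\<bar>"] by eventually_elim (auto simp: gn_def)
  qed simp
  define M0 where "M0 = max 1 \<bar>H 0\<bar>"
  have M0: "M0 \<ge> 1" "M0 \<ge> \<bar>H 0\<bar>" unfolding M0_def by auto
  have posb: "(\<Sum>k\<le>n. gp M (znk n k) * fnk n k) \<le> C * Gp M" if M: "M \<ge> M0" and n: "n \<ge> 1" for M n
    unfolding C_def Gp_def
  proof (rule riemann_bound[OF _ _ _ int_gp n])
    show "\<And>a b. a \<le> b \<Longrightarrow> gp M a \<le> gp M b" using Hmono M M0 by (fastforce simp: gp_def)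
    show "\<And>x. 0 \<le> gp M x" using M M0 by (auto simp: gp_def)
    show "\<And>x. x \<le> 0 \<Longrightarrow> gp M x = 0" using Hmono[of _ 0] M M0 by (fastforce simp: gp_def)
    show "0 \<le> M" using M M0 by simp
  qed
  \<comment> \<open>negative tail bound, by reflection\<close>
  have negb: "(\<Sum>k\<le>n. gn M (znk n k) * fnk n k) \<le> C * Gn M" if M: "M \<ge> M0" and n: "n \<ge> 1" for M n
  proof -
    define g where "g x = gn M (- x)" for x
    have M0': "M \<ge> 0" using M M0 by simp
    have intg: "integrable lborel (\<lambda>x. g x * phi x)"
    proof -
      have "integrable lborel (\<lambda>x. (\<lambda>u. gn M u * phi u) (0 + (-1) * x))"
        using int_gn[OF M0'] by (subst lborel_integrable_real_affine_iff) auto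
      then show ?thesis by (simp add: g_def phi_even)
    qed
    have intg_eq: "(\<integral>x. g x * phi x \<partial>lborel) = Gn M"
    proof -
      have "Gn M = \<bar>-1\<bar> *\<^sub>R (\<integral>x. (\<lambda>u. gn M u * phi u) (0 + (-1) * x) \<partial>lborel)"
        unfolding Gn_def by (rule lborel_integral_real_affine) simp
      then show ?thesis by (simp add: g_def phi_even)
    qed
    have "(\<Sum>k\<le>n. gn M (znk n k) * fnk n k) = (\<Sum>k\<le>n. g (znk n (n-k)) * fnk n (n-k))"
      by (intro sum.cong refl) (simp add: g_def znk_rev fnk_rev)
    also have "\<dots> = (\<Sum>k\<le>n. g (znk n k) * fnk n k)"
      by (rule sum_rev[where f = "\<lambda>k. g (znk n k) * fnk n k"])
    also have "\<dots> \<le> C * Gn M" unfolding C_def intg_eq[symmetric]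
    proof (rule riemann_bound[OF _ _ _ intg n])
      show "\<And>a b. a \<le> b \<Longrightarrow> g a \<le> g b"
      proof -
        fix a b :: real assume "a \<le> b"
        then have "H (-b) \<le> H (-a)" by (intro Hmono) simp
        then show "g a \<le> g b" using M0' by (auto simp: g_def gn_def)
      qed
      show "\<And>x. 0 \<le> g x" using M0' by (auto simp: g_def gn_def)
      show "\<And>x. x \<le> 0 \<Longrightarrow> g x = 0"
      proof -
        fix x :: real assume "x \<le> 0"
        then have "H 0 \<le> H (-x)" by (intro Hmono) simp
        then show "g x = 0" using M M0 by (auto simp: g_def gn_def)
      qed
    qed
    finally show ?thesis .
  qed
  have part1: "\<forall>\<epsilon>>0. \<exists>M>0. \<forall>n\<ge>1.
            (\<Sum>k\<le>n. (if H (znk n k) > M then H (znk n k) else 0) * fnk n k) < \<epsilon> \<and>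
            (\<Sum>k\<le>n. (if H (znk n k) < - M then \<bar>H (znk n k)\<bar> else 0) * fnk n k) < \<epsilon>"
  proof (intro allI impI)
    fix \<epsilon> :: real assume e: "\<epsilon> > 0"
    have "eventually (\<lambda>M. C * Gp M < \<epsilon>) at_top"
      using tendsto_mult_right_zero[OF Gp0, of C] e by (auto dest: order_tendstoD(2))
    moreover have "eventually (\<lambda>M. C * Gn M < \<epsilon>) at_top"
      using tendsto_mult_right_zero[OF Gn0, of C] e by (auto dest: order_tendstoD(2))
    moreover have "eventually (\<lambda>M. M \<ge> M0) at_top" by simp
    ultimately have "eventually (\<lambda>M. C * Gp M < \<epsilon> \<and> C * Gn M < \<epsilon> \<and> M \<ge> M0) at_top"
      by eventually_elim auto
    then obtain M where M: "C * Gp M < \<epsilon>" "C * Gn M < \<epsilon>" "M \<ge> M0"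
      by (auto simp: eventually_at_top_linorder)
    show "\<exists>M>0. \<forall>n\<ge>1.
            (\<Sum>k\<le>n. (if H (znk n k) > M then H (znk n k) else 0) * fnk n k) < \<epsilon> \<and>
            (\<Sum>k\<le>n. (if H (znk n k) < - M then \<bar>H (znk n k)\<bar> else 0) * fnk n k) < \<epsilon>"
    proof (intro exI[of _ M] conjI allI impI)
      show "M > 0" using M M0 by simp
      fix n :: nat assume n: "n \<ge> 1"
      have "(\<Sum>k\<le>n. (if H (znk n k) > M then H (znk n k) else 0) * fnk n k) = (\<Sum>k\<le>n. gp M (znk n k) * fnk n k)"
        by (simp add: gp_def)
      also have "\<dots> \<le> C * Gp M" by (rule posb[OF M(3) n])
      finally show "(\<Sum>k\<le>n. (if H (znk n k) > M then H (znk n k) else 0) * fnk n k) < \<epsilon>" using M by simp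
      have "(\<Sum>k\<le>n. (if H (znk n k) < - M then \<bar>H (znk n k)\<bar> else 0) * fnk n k) = (\<Sum>k\<le>n. gn M (znk n k) * fnk n k)"
        using M M0 by (intro sum.cong refl) (auto simp: gn_def)
      also have "\<dots> \<le> C * Gn M" by (rule negb[OF M(3) n])
      finally show "(\<Sum>k\<le>n. (if H (znk n k) < - M then \<bar>H (znk n k)\<bar> else 0) * fnk n k) < \<epsilon>" using M by simp
    qed
  qed
  have part2: "limsup (\<lambda>n. ereal (\<Sum>k\<le>n. H (znk n k) * fnk n k)) \<le> ereal (\<integral> x. H x * phi x \<partial>lborel)"
  proof (rule ereal_le_epsilon2)
    fix \<delta> :: real assume d: "\<delta> > 0"
    have "((\<lambda>M. Gn M + C * Gp M) \<longlongrightarrow> 0) at_top"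
      using tendsto_add[OF Gn0 tendsto_mult_right_zero[OF Gp0, of C]] by simp
    then have "eventually (\<lambda>M. Gn M + C * Gp M < \<delta>) at_top"
      using d by (auto dest: order_tendstoD(2))
    moreover have "eventually (\<lambda>M. M \<ge> M0) at_top" by simp
    ultimately have "eventually (\<lambda>M. Gn M + C * Gp M < \<delta> \<and> M \<ge> M0) at_top"
      by eventually_elim auto
    then obtain M where M: "Gn M + C * Gp M < \<delta>" "M \<ge> M0"
      by (auto simp: eventually_at_top_linorder)
    have M0': "M \<ge> 0" using M M0 by simp
    define h where "h x = max (-M) (min M (H x))" for x
    have hc: "isCont h x" for x unfolding h_def by (intro continuous_intros Hcont)
    have hb: "\<bar>h x\<bar> \<le> M" for x unfolding h_def using M0' by auto
    have hm[measurable]: "h \<in> borel_measurable borel" unfolding h_def by measurable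
    have lim: "(\<lambda>n. \<Sum>k\<le>n. h (znk n k) * fnk n k) \<longlonglongrightarrow> (\<integral>x. h x * phi x \<partial>lborel)"
      by (rule binom_limit[OF hc hb])
    have Hle: "H x \<le> h x + gp M x" for x unfolding h_def gp_def using M0' by auto
    have hle: "h x \<le> H x + gn M x" for x unfolding h_def gn_def using M0' by auto
    have ev: "eventually (\<lambda>n. ereal (\<Sum>k\<le>n. H (znk n k) * fnk n k)
          \<le> ereal ((\<Sum>k\<le>n. h (znk n k) * fnk n k) + C * Gp M)) sequentially"
      using eventually_ge_at_top[of 1]
    proof eventually_elim
      case (elim n)
      have "(\<Sum>k\<le>n. H (znk n k) * fnk n k) \<le> (\<Sum>k\<le>n. (h (znk n k) + gp M (znk n k)) * fnk n k)"
        using Hle by (intro sum_mono mult_right_mono) (auto simp: fnk_def)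
      also have "\<dots> = (\<Sum>k\<le>n. h (znk n k) * fnk n k) + (\<Sum>k\<le>n. gp M (znk n k) * fnk n k)"
        by (simp add: distrib_right sum.distrib)
      also have "\<dots> \<le> (\<Sum>k\<le>n. h (znk n k) * fnk n k) + C * Gp M"
        using posb[OF M(2) elim] by simp
      finally show ?case by simp
    qed
    have inth: "integrable lborel (\<lambda>x. h x * phi x)"
      by (rule Bochner_Integration.integrable_bound[of _ "\<lambda>x. M * phi x"])
         (use integrable_phi hb M0' in \<open>auto simp: abs_mult abs_of_pos[OF phi_pos] intro!: AE_I2 mult_right_mono less_imp_le[OF phi_pos]\<close>)
    have ih: "(\<integral>x. h x * phi x \<partial>lborel) \<le> (\<integral> x. H x * phi x \<partial>lborel) + Gn M"
    proof -
      have "(\<integral>x. h x * phi x \<partial>lborel) \<le> (\<integral>x. H x * phi x + gn M x * phi x \<partial>lborel)"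
      proof (rule integral_mono[OF inth Bochner_Integration.integrable_add[OF intH int_gn[OF M0']]])
        fix x
        have "h x * phi x \<le> (H x + gn M x) * phi x" using hle phi_pos[of x]
          by (intro mult_right_mono) (auto simp: less_imp_le)
        then show "h x * phi x \<le> H x * phi x + gn M x * phi x" by (simp add: distrib_right)
      qed
      also have "\<dots> = (\<integral> x. H x * phi x \<partial>lborel) + Gn M"
        unfolding Gn_def using intH int_gn[OF M0'] by simp
      finally show ?thesis .
    qed
    have "limsup (\<lambda>n. ereal (\<Sum>k\<le>n. H (znk n k) * fnk n k))
        \<le> limsup (\<lambda>n. ereal ((\<Sum>k\<le>n. h (znk n k) * fnk n k) + C * Gp M))"
      by (rule Limsup_mono[OF ev])
    also have "\<dots> = ereal ((\<integral>x. h x * phi x \<partial>lborel) + C * Gp M)"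
      by (intro lim_imp_Limsup) (auto intro!: tendsto_intros lim)
    also have "\<dots> \<le> ereal ((\<integral> x. H x * phi x \<partial>lborel) + \<delta>)"
      using ih M by simp
    finally show "limsup (\<lambda>n. ereal (\<Sum>k\<le>n. H (znk n k) * fnk n k))
        \<le> ereal (\<integral> x. H x * phi x \<partial>lborel) + ereal \<delta>" by simp
  qed
  show ?thesis using part1 part2 by blast
qed


end
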